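(* Let $T:\mathbb{R}^d\to\mathbb{R}^d$ be nonexpansive with respect to a norm $\|\cdot\|$ on $\mathbb{R}^d$, with $\operatorname{Fix}T\neq\emptyset$. Let $(\beta_n)_{n\ge1}\subseteq(0,1)$ be nondecreasing with $\lim_n\beta_n=1$, let $x^0\in\mathbb{R}^d$, and let $(x^n)_{n\ge1}$ be generated by $$x^n=(1-\beta_n)x^0+\beta_n\bigl(Tx^{n-1}+U_n\bigr),\qquad n\ge1,$$ where $(U_n)_{n\ge1}$ are random vectors in $\mathbb{R}^d$ with $\mathbb{E}(U_n)=0$ and $\sigma_n:=\mathbb{E}(\|U_n\|)<\infty$. Assume there is $\bar\kappa\ge0$ with $\sup_{n\ge0}\mathbb{E}(\|Tx^n-x^0\|)\le\bar\kappa$. Then for all $n\ge1$, $$\mathbb{E}(\|x^n-Tx^n\|)\le\bar\kappa(1-\beta_n)+\sum_{i=1}^n B_i^n\bigl(\bar\kappa(\beta_i-\beta_{i-1})+\beta_i\sigma_i+\beta_{i-1}\sigma_{i-1}\bigr)+\beta_n\sigma_n.$$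
   Context: Notation: $B_i^n:=\prod_{j=i}^n\beta_j$, with the conventions $\sigma_0=\beta_0=0$ and $B_i^n=1$ if $i>n\ge0$. $\operatorname{Fix}T$ denotes the set of fixed points of $T$. *)

theory Defs
  imports "HOL-Probability.Probability"
begin

definition is_norm :: "(real ^ 'd \<Rightarrow> real) \<Rightarrow> bool" where
  "is_norm N \<longleftrightarrow>
     (\<forall>x. N x = 0 \<longleftrightarrow> x = 0) \<and>
     (\<forall>c x. N (c *\<^sub>R x) = \<bar>c\<bar> * N x) \<and>
     (\<forall>x y. N (x + y) \<le> N x + N y)"

definition nonexpansive_wrt :: "(real ^ 'd \<Rightarrow> real) \<Rightarrow> (real ^ 'd \<Rightarrow> real ^ 'd) \<Rightarrow> bool" where
  "nonexpansive_wrt N T \<longleftrightarrow> (\<forall>x y. N (T x - T y) \<le> N (x - y))"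

definition betaz :: "(nat \<Rightarrow> real) \<Rightarrow> nat \<Rightarrow> real" where
  "betaz \<beta> i = (if i = 0 then 0 else \<beta> i)"

definition sigmaE :: "'w measure \<Rightarrow> (real ^ 'd \<Rightarrow> real) \<Rightarrow> (nat \<Rightarrow> 'w \<Rightarrow> real ^ 'd) \<Rightarrow> nat \<Rightarrow> real" where
  "sigmaE M N U i = (if i = 0 then 0 else (\<integral>\<omega>. N (U i \<omega>) \<partial>M))"

definition Bprod :: "(nat \<Rightarrow> real) \<Rightarrow> nat \<Rightarrow> nat \<Rightarrow> real" where
  "Bprod \<beta> i n = (\<Prod>j=i..n. betaz \<beta> j)"

end

theory Submission
  imports Defs
begin

lemma nrm_0: "is_norm N \<Longrightarrow> N 0 = 0" unfolding is_norm_def by blast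
lemma nrm_scale: "is_norm N \<Longrightarrow> N (c *\<^sub>R x) = \<bar>c\<bar> * N x" unfolding is_norm_def by blast
lemma nrm_tri: "is_norm N \<Longrightarrow> N (x + y) \<le> N x + N y" unfolding is_norm_def by blast
lemma nrm_minus: "is_norm N \<Longrightarrow> N (- x) = N x"
  using nrm_scale[of N "-1" x] by simp
lemma nrm_nonneg: "is_norm N \<Longrightarrow> N x \<ge> 0"
  using nrm_tri[of N x "-x"] nrm_minus[of N x] nrm_0[of N] by simp
lemma nrm_commute: "is_norm N \<Longrightarrow> N (x - y) = N (y - x)"
  using nrm_minus[of N "x - y"] by simp
lemma nrm_tri_diff: "is_norm N \<Longrightarrow> N (x - y) \<le> N x + N y"
  using nrm_tri[of N x "-y"] nrm_minus[of N y] by simp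
lemma nrm_pos: "is_norm N \<Longrightarrow> x \<noteq> 0 \<Longrightarrow> N x > 0"
  using nrm_nonneg[of N x] unfolding is_norm_def by force

lemma nrm_convex: "is_norm N \<Longrightarrow> convex_on UNIV N"
proof (rule convex_onI)
  fix t :: real and x y assume N: "is_norm N" and t: "0 < t" "t < 1"
  have "N ((1 - t) *\<^sub>R x + t *\<^sub>R y) \<le> N ((1 - t) *\<^sub>R x) + N (t *\<^sub>R y)" by (rule nrm_tri[OF N])
  also have "\<dots> = (1 - t) * N x + t * N y" using t by (simp add: nrm_scale[OF N])
  finally show "N ((1 - t) *\<^sub>R x + t *\<^sub>R y) \<le> (1 - t) * N x + t * N y" .
qed simp

lemma nrm_cont: "is_norm N \<Longrightarrow> continuous_on UNIV N"
  by (rule convex_on_continuous) (auto intro: nrm_convex)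

lemma nrm_lower: assumes N: "is_norm (N :: real ^ 'd \<Rightarrow> real)"
  shows "\<exists>m>0. \<forall>y. m * norm y \<le> N y"
proof -
  have ne: "sphere (0::real^'d) 1 \<noteq> {}"
    using vector_choose_size[of 1] by (auto simp: sphere_def)
  obtain z where z: "z \<in> sphere 0 1" and zmin: "\<forall>y\<in>sphere 0 1. N z \<le> N y"
    using continuous_attains_inf[OF compact_sphere ne continuous_on_subset[OF nrm_cont[OF N]]] by blast
  have z0: "z \<noteq> 0" using z by auto
  have "\<forall>y. N z * norm y \<le> N y"
  proof
    fix y :: "real^'d"
    show "N z * norm y \<le> N y"
    proof (cases "y = 0")
      case True then show ?thesis by (simp add: nrm_0[OF N])
    next
      case False
      then have "(1 / norm y) *\<^sub>R y \<in> sphere 0 1" by simp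
      then have "N z \<le> N ((1 / norm y) *\<^sub>R y)" using zmin by blast
      also have "\<dots> = N y / norm y" by (simp add: nrm_scale[OF N])
      finally show ?thesis using False by (simp add: field_simps)
    qed
  qed
  then show ?thesis using nrm_pos[OF N z0] by blast
qed

lemma T_cont: assumes N: "is_norm (N :: real ^ 'd \<Rightarrow> real)" and T: "nonexpansive_wrt N T"
  shows "continuous_on UNIV T"
proof -
  obtain m where m: "m > 0" "\<And>y. m * norm y \<le> N y" using nrm_lower[OF N] by blast
  have c0: "\<forall>e>0. \<exists>d>0. \<forall>x'. dist x' 0 < d \<longrightarrow> dist (N x') (N 0) < e"
    using nrm_cont[OF N] unfolding continuous_on_iff by blast
  show ?thesis unfolding continuous_on_iff
  proof (intro ballI allI impI)
    fix x :: "real^'d" and e :: real assume e: "e > 0"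
    obtain d where d: "d > 0" "\<And>x'. dist x' 0 < d \<Longrightarrow> dist (N x') (N 0) < m * e"
      using c0 m(1) e by (meson mult_pos_pos)
    show "\<exists>d>0. \<forall>x'\<in>UNIV. dist x' x < d \<longrightarrow> dist (T x') (T x) < e"
    proof (intro exI conjI ballI impI)
      fix x' assume "dist x' x < d"
      then have "dist (x' - x) 0 < d" by (simp add: dist_norm)
      then have "N (x' - x) < m * e" using d(2)[of "x' - x"] nrm_0[OF N] nrm_nonneg[OF N, of "x'-x"] by simp
      moreover have "N (T x' - T x) \<le> N (x' - x)" using T unfolding nonexpansive_wrt_def by blast
      moreover have "m * norm (T x' - T x) \<le> N (T x' - T x)" by (rule m(2))
      ultimately have "m * norm (T x' - T x) < m * e" by linarith
      then show "dist (T x') (T x) < e" using m(1) by (simp add: dist_norm)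
    qed (rule d(1))
  qed
qed


fun rr :: "(nat \<Rightarrow> real) \<Rightarrow> (nat \<Rightarrow> real) \<Rightarrow> nat \<Rightarrow> real" where
  "rr b a 0 = 0"
| "rr b a (Suc m) = a (Suc m) + betaz b m * rr b a m"

lemma rr_closed: "betaz b n * rr b a n = (\<Sum>i=1..n. Bprod b i n * a i)"
proof (induction n)
  case 0 then show ?case by (simp add: betaz_def)
next
  case (Suc m)
  have "(\<Sum>i=1..Suc m. Bprod b i (Suc m) * a i)
      = Bprod b (Suc m) (Suc m) * a (Suc m) + (\<Sum>i=1..m. Bprod b i (Suc m) * a i)"
    by (simp add: sum.nat_ivl_Suc')
  also have "(\<Sum>i=1..m. Bprod b i (Suc m) * a i) = (\<Sum>i=1..m. betaz b (Suc m) * (Bprod b i m * a i))"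
    by (rule sum.cong) (auto simp: Bprod_def prod.nat_ivl_Suc')
  also have "\<dots> = betaz b (Suc m) * (betaz b m * rr b a m)"
    by (simp add: Suc.IH sum_distrib_left)
  finally show ?case by (simp add: Bprod_def algebra_simps)
qed

lemma rr_nonneg: "(\<And>i. a i \<ge> 0) \<Longrightarrow> (\<And>i. betaz b i \<ge> 0) \<Longrightarrow> rr b a n \<ge> 0"
  by (induction n) auto


lemma vec_id:
  fixes X Y p q u1 u2 x0 :: "'a::real_vector"
  assumes "X = (1 - b2) *\<^sub>R x0 + b2 *\<^sub>R (p + u2)" "Y = (1 - b1) *\<^sub>R x0 + b1 *\<^sub>R (q + u1)"
  shows "X - Y = ((b2 - b1) *\<^sub>R (p - x0) + b1 *\<^sub>R (p - q)) + (b2 *\<^sub>R u2 - b1 *\<^sub>R u1)"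
  unfolding assms by (simp add: algebra_simps)

lemma nn_add_le:
  assumes "f \<in> borel_measurable M" "g \<in> borel_measurable M" "\<And>\<omega>. f \<omega> \<ge> 0" "\<And>\<omega>. g \<omega> \<ge> 0"
    "(\<integral>\<^sup>+\<omega>. ennreal (f \<omega>) \<partial>M) \<le> ennreal A" "(\<integral>\<^sup>+\<omega>. ennreal (g \<omega>) \<partial>M) \<le> ennreal B"
    "A \<ge> 0" "B \<ge> 0"
  shows "(\<integral>\<^sup>+\<omega>. ennreal (f \<omega> + g \<omega>) \<partial>M) \<le> ennreal (A + B)"
proof -
  have "(\<integral>\<^sup>+\<omega>. ennreal (f \<omega> + g \<omega>) \<partial>M) = (\<integral>\<^sup>+\<omega>. ennreal (f \<omega>) + ennreal (g \<omega>) \<partial>M)"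
    using assms(3,4) by (simp add: ennreal_plus)
  also have "\<dots> = (\<integral>\<^sup>+\<omega>. ennreal (f \<omega>) \<partial>M) + (\<integral>\<^sup>+\<omega>. ennreal (g \<omega>) \<partial>M)"
    using assms(1,2) by (simp add: nn_integral_add)
  also have "\<dots> \<le> ennreal A + ennreal B" using assms(5,6) by (rule add_mono)
  also have "\<dots> = ennreal (A + B)" using assms(7,8) by (simp add: ennreal_plus)
  finally show ?thesis .
qed

lemma nn_cmult_le:
  assumes "f \<in> borel_measurable M" "c \<ge> 0"
    "(\<integral>\<^sup>+\<omega>. ennreal (f \<omega>) \<partial>M) \<le> ennreal A"
  shows "(\<integral>\<^sup>+\<omega>. ennreal (c * f \<omega>) \<partial>M) \<le> ennreal (c * A)"
proof -
  have "(\<integral>\<^sup>+\<omega>. ennreal (c * f \<omega>) \<partial>M) = (\<integral>\<^sup>+\<omega>. ennreal c * ennreal (f \<omega>) \<partial>M)"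
    using assms(2) by (simp add: ennreal_mult')
  also have "\<dots> = ennreal c * (\<integral>\<^sup>+\<omega>. ennreal (f \<omega>) \<partial>M)"
    using assms(1) by (simp add: nn_integral_cmult)
  also have "\<dots> \<le> ennreal c * ennreal A" using assms(3) by (rule mult_left_mono) simp
  also have "\<dots> = ennreal (c * A)" using assms(2) by (simp add: ennreal_mult')
  finally show ?thesis .
qed

lemma nn_mono_le:
  assumes "\<And>\<omega>. f \<omega> \<le> g \<omega>" "(\<integral>\<^sup>+\<omega>. ennreal (g \<omega>) \<partial>M) \<le> ennreal A"
  shows "(\<integral>\<^sup>+\<omega>. ennreal (f \<omega>) \<partial>M) \<le> ennreal A"
  using assms by (meson ennreal_leI le_funI nn_integral_mono order_trans)

theorem proposition1:
  fixes N :: "real ^ 'd \<Rightarrow> real"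
    and T :: "real ^ 'd \<Rightarrow> real ^ 'd"
    and M :: "'w measure"
    and \<beta> :: "nat \<Rightarrow> real"
    and x0 :: "real ^ 'd"
    and x :: "nat \<Rightarrow> 'w \<Rightarrow> real ^ 'd"
    and U :: "nat \<Rightarrow> 'w \<Rightarrow> real ^ 'd"
    and \<kappa> :: real
  assumes "is_norm N"
    and "nonexpansive_wrt N T"
    and "\<exists>p. T p = p"
    and "prob_space M"
    and "\<And>n. n \<ge> 1 \<Longrightarrow> 0 < \<beta> n \<and> \<beta> n < 1"
    and "\<And>n. n \<ge> 1 \<Longrightarrow> \<beta> n \<le> \<beta> (Suc n)"
    and "\<beta> \<longlonglongrightarrow> 1"
    and "\<And>\<omega>. x 0 \<omega> = x0"
    and "\<And>n \<omega>. n \<ge> 1 \<Longrightarrow>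
           x n \<omega> = (1 - \<beta> n) *\<^sub>R x0 + \<beta> n *\<^sub>R (T (x (n - 1) \<omega>) + U n \<omega>)"
    and "\<And>n. n \<ge> 1 \<Longrightarrow> U n \<in> borel_measurable M"
    and "\<And>n. n \<ge> 1 \<Longrightarrow> integrable M (U n)"
    and "\<And>n. n \<ge> 1 \<Longrightarrow> (\<integral>\<omega>. U n \<omega> \<partial>M) = 0"
    and "\<And>n. n \<ge> 1 \<Longrightarrow> integrable M (\<lambda>\<omega>. N (U n \<omega>))"
    and "\<kappa> \<ge> 0"
    and "\<And>n. (\<integral>\<^sup>+\<omega>. ennreal (N (T (x n \<omega>) - x0)) \<partial>M) \<le> ennreal \<kappa>"
    and "n \<ge> 1"
  shows "(\<integral>\<^sup>+\<omega>. ennreal (N (x n \<omega> - T (x n \<omega>))) \<partial>M)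
         \<le> ennreal (\<kappa> * (1 - \<beta> n)
              + (\<Sum>i=1..n. Bprod \<beta> i n *
                   (\<kappa> * (betaz \<beta> i - betaz \<beta> (i - 1))
                    + betaz \<beta> i * sigmaE M N U i
                    + betaz \<beta> (i - 1) * sigmaE M N U (i - 1)))
              + \<beta> n * sigmaE M N U n)"
  
proof -
  note N = assms(1) and TN = assms(2)
  interpret prob_space M by (rule assms(4))
  have Tm[measurable]: "T \<in> borel_measurable borel"
    by (rule borel_measurable_continuous_onI[OF T_cont[OF N TN]])
  have Nm[measurable]: "N \<in> borel_measurable borel"
    by (rule borel_measurable_continuous_onI[OF nrm_cont[OF N]])
  have Um[measurable]: "U (Suc m) \<in> borel_measurable M" for m using assms(10) by simp
  have xm[measurable]: "x m \<in> borel_measurable M" for m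
  proof (induction m)
    case 0
    have "x 0 = (\<lambda>\<omega>. x0)" using assms(8) by auto
    then show ?case by simp
  next
    case (Suc m)
    have "x (Suc m) = (\<lambda>\<omega>. (1 - \<beta> (Suc m)) *\<^sub>R x0 + \<beta> (Suc m) *\<^sub>R (T (x m \<omega>) + U (Suc m) \<omega>))"
      using assms(9)[of "Suc m"] by auto
    then show ?case using Suc.IH by simp
  qed
  have bznn: "betaz \<beta> i \<ge> 0" for i using assms(5)[of i] by (auto simp: betaz_def)
  have bzmono: "betaz \<beta> (i - 1) \<le> betaz \<beta> i" for i
  proof (cases "i \<ge> 2")
    case True then show ?thesis using assms(6)[of "i - 1"] by (auto simp: betaz_def)
  next
    case False then have "i = 0 \<or> i = 1" by auto
    then show ?thesis using bznn[of i] by (auto simp: betaz_def)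
  qed
  have sgnn: "sigmaE M N U i \<ge> 0" for i
    by (auto simp: sigmaE_def intro!: integral_nonneg_AE nrm_nonneg[OF N])
  have Vint: "(\<integral>\<^sup>+\<omega>. ennreal (N (U i \<omega>)) \<partial>M) \<le> ennreal (sigmaE M N U i)" if "i \<ge> 1" for i
    using that nn_integral_eq_integral[OF assms(13)[OF that]] nrm_nonneg[OF N]
    by (simp add: sigmaE_def)
  define a where "a i = \<kappa> * (betaz \<beta> i - betaz \<beta> (i - 1))
                    + betaz \<beta> i * sigmaE M N U i
                    + betaz \<beta> (i - 1) * sigmaE M N U (i - 1)" for i
  have ann: "a i \<ge> 0" for i
    unfolding a_def using bzmono[of i] bznn[of i] bznn[of "i-1"] sgnn[of i] sgnn[of "i-1"] assms(14)
    by simp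
  have rrnn: "rr \<beta> a i \<ge> 0" for i by (rule rr_nonneg[OF ann bznn])
  have nnT: "N (T a' - T b') \<le> N (a' - b')" for a' b' using TN unfolding nonexpansive_wrt_def by blast
  have D: "(\<integral>\<^sup>+\<omega>. ennreal (N (x (Suc m) \<omega> - x m \<omega>)) \<partial>M) \<le> ennreal (rr \<beta> a (Suc m))" for m
  proof (induction m)
    case 0
    have b1: "0 < \<beta> 1" using assms(5)[of 1] by simp
    have pw: "N (x (Suc 0) \<omega> - x 0 \<omega>) \<le> \<beta> 1 * N (T (x 0 \<omega>) - x0) + \<beta> 1 * N (U 1 \<omega>)" for \<omega>
    proof -
      have "x (Suc 0) \<omega> - x 0 \<omega> = \<beta> 1 *\<^sub>R (T (x 0 \<omega>) - x0) + \<beta> 1 *\<^sub>R U 1 \<omega>"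
        using assms(9)[of 1 \<omega>] assms(8)[of \<omega>] by (simp add: algebra_simps)
      then show ?thesis using nrm_tri[OF N, of "\<beta> 1 *\<^sub>R (T (x 0 \<omega>) - x0)" "\<beta> 1 *\<^sub>R U 1 \<omega>"] b1
        by (simp add: nrm_scale[OF N])
    qed
    have "(\<integral>\<^sup>+\<omega>. ennreal (\<beta> 1 * N (T (x 0 \<omega>) - x0) + \<beta> 1 * N (U 1 \<omega>)) \<partial>M)
       \<le> ennreal (\<beta> 1 * \<kappa> + \<beta> 1 * sigmaE M N U 1)"
      apply (rule nn_add_le)
      using b1 nrm_nonneg[OF N] assms(14) sgnn
      by (auto intro!: nn_cmult_le assms(15) Vint)
    then have "(\<integral>\<^sup>+\<omega>. ennreal (N (x (Suc 0) \<omega> - x 0 \<omega>)) \<partial>M) \<le> ennreal (\<beta> 1 * \<kappa> + \<beta> 1 * sigmaE M N U 1)"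
      by (rule nn_mono_le[OF pw])
    moreover have "rr \<beta> a (Suc 0) = \<beta> 1 * \<kappa> + \<beta> 1 * sigmaE M N U 1"
      by (simp add: a_def betaz_def sigmaE_def)
    ultimately show ?case by simp
  next
    case (Suc m)
    let ?b2 = "\<beta> (Suc (Suc m))" and ?b1 = "\<beta> (Suc m)"
    have b1: "0 < ?b1" "0 < ?b2" "?b1 \<le> ?b2" using assms(5)[of "Suc m"] assms(5)[of "Suc (Suc m)"] assms(6)[of "Suc m"] by auto
    have pw: "N (x (Suc (Suc m)) \<omega> - x (Suc m) \<omega>) \<le>
       ((?b2 - ?b1) * N (T (x (Suc m) \<omega>) - x0) + ?b1 * N (x (Suc m) \<omega> - x m \<omega>))
       + (?b2 * N (U (Suc (Suc m)) \<omega>) + ?b1 * N (U (Suc m) \<omega>))" for \<omega>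
    proof -
      have "x (Suc (Suc m)) \<omega> - x (Suc m) \<omega> = ((?b2 - ?b1) *\<^sub>R (T (x (Suc m) \<omega>) - x0) + ?b1 *\<^sub>R (T (x (Suc m) \<omega>) - T (x m \<omega>)))
          + (?b2 *\<^sub>R U (Suc (Suc m)) \<omega> - ?b1 *\<^sub>R U (Suc m) \<omega>)"
        using vec_id[OF assms(9)[of "Suc (Suc m)" \<omega>] assms(9)[of "Suc m" \<omega>]] by simp
      then have "N (x (Suc (Suc m)) \<omega> - x (Suc m) \<omega>) \<le>
          (N ((?b2 - ?b1) *\<^sub>R (T (x (Suc m) \<omega>) - x0)) + N (?b1 *\<^sub>R (T (x (Suc m) \<omega>) - T (x m \<omega>))))
          + (N (?b2 *\<^sub>R U (Suc (Suc m)) \<omega>) + N (?b1 *\<^sub>R U (Suc m) \<omega>))"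
        using nrm_tri[OF N] nrm_tri_diff[OF N] by (smt (verit))
      also have "\<dots> \<le> ((?b2 - ?b1) * N (T (x (Suc m) \<omega>) - x0) + ?b1 * N (x (Suc m) \<omega> - x m \<omega>))
       + (?b2 * N (U (Suc (Suc m)) \<omega>) + ?b1 * N (U (Suc m) \<omega>))"
        using b1 nnT[of "x (Suc m) \<omega>" "x m \<omega>"] by (simp add: nrm_scale[OF N] mult_left_mono)
      finally show ?thesis .
    qed
    have "(\<integral>\<^sup>+\<omega>. ennreal (((?b2 - ?b1) * N (T (x (Suc m) \<omega>) - x0) + ?b1 * N (x (Suc m) \<omega> - x m \<omega>))
       + (?b2 * N (U (Suc (Suc m)) \<omega>) + ?b1 * N (U (Suc m) \<omega>))) \<partial>M)
       \<le> ennreal (((?b2 - ?b1) * \<kappa> + ?b1 * rr \<beta> a (Suc m)) + (?b2 * sigmaE M N U (Suc (Suc m)) + ?b1 * sigmaE M N U (Suc m)))"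
    proof -
      have nn: "\<And>\<omega>. 0 \<le> N (v \<omega>)" for v using nrm_nonneg[OF N] by blast
      have i1: "(\<integral>\<^sup>+\<omega>. ennreal ((?b2 - ?b1) * N (T (x (Suc m) \<omega>) - x0)) \<partial>M) \<le> ennreal ((?b2 - ?b1) * \<kappa>)"
        by (rule nn_cmult_le) (use b1 assms(15) in auto)
      have i2: "(\<integral>\<^sup>+\<omega>. ennreal (?b1 * N (x (Suc m) \<omega> - x m \<omega>)) \<partial>M) \<le> ennreal (?b1 * rr \<beta> a (Suc m))"
        by (rule nn_cmult_le) (use b1 Suc.IH in auto)
      have i3: "(\<integral>\<^sup>+\<omega>. ennreal (?b2 * N (U (Suc (Suc m)) \<omega>)) \<partial>M) \<le> ennreal (?b2 * sigmaE M N U (Suc (Suc m)))"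
        by (rule nn_cmult_le) (use b1 Vint in auto)
      have i4: "(\<integral>\<^sup>+\<omega>. ennreal (?b1 * N (U (Suc m) \<omega>)) \<partial>M) \<le> ennreal (?b1 * sigmaE M N U (Suc m))"
        by (rule nn_cmult_le) (use b1 Vint in auto)
      show ?thesis
        apply (rule nn_add_le[OF _ _ _ _ nn_add_le[OF _ _ _ _ i1 i2] nn_add_le[OF _ _ _ _ i3 i4]])
        using b1 rrnn sgnn assms(14) by (simp_all del: rr.simps add: nrm_nonneg[OF N])
    qed
    then have "(\<integral>\<^sup>+\<omega>. ennreal (N (x (Suc (Suc m)) \<omega> - x (Suc m) \<omega>)) \<partial>M) \<le>
       ennreal (((?b2 - ?b1) * \<kappa> + ?b1 * rr \<beta> a (Suc m)) + (?b2 * sigmaE M N U (Suc (Suc m)) + ?b1 * sigmaE M N U (Suc m)))"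
      by (rule nn_mono_le[OF pw])
    moreover have "rr \<beta> a (Suc (Suc m)) = ((?b2 - ?b1) * \<kappa> + ?b1 * rr \<beta> a (Suc m)) + (?b2 * sigmaE M N U (Suc (Suc m)) + ?b1 * sigmaE M N U (Suc m))"
      by (simp add: a_def betaz_def algebra_simps)
    ultimately show ?case by simp
  qed
  obtain m where nm: "n = Suc m" using assms(16) by (cases n) auto
  have bn: "0 < \<beta> n" "\<beta> n < 1" using assms(5) assms(16) by auto
  have pw: "N (x n \<omega> - T (x n \<omega>)) \<le> (1 - \<beta> n) * N (T (x n \<omega>) - x0) + (\<beta> n * N (x n \<omega> - x m \<omega>) + \<beta> n * N (U n \<omega>))" for \<omega>
  proof -
    have "x n \<omega> - T (x n \<omega>) = (1 - \<beta> n) *\<^sub>R (x0 - T (x n \<omega>)) + (\<beta> n *\<^sub>R (T (x m \<omega>) - T (x n \<omega>)) + \<beta> n *\<^sub>R U n \<omega>)"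
      using assms(9)[of n \<omega>] nm by (simp add: algebra_simps)
    then have "N (x n \<omega> - T (x n \<omega>)) \<le> N ((1 - \<beta> n) *\<^sub>R (x0 - T (x n \<omega>))) + (N (\<beta> n *\<^sub>R (T (x m \<omega>) - T (x n \<omega>))) + N (\<beta> n *\<^sub>R U n \<omega>))"
      using nrm_tri[OF N] by (smt (verit))
    also have "\<dots> \<le> (1 - \<beta> n) * N (T (x n \<omega>) - x0) + (\<beta> n * N (x n \<omega> - x m \<omega>) + \<beta> n * N (U n \<omega>))"
      using bn nnT[of "x m \<omega>" "x n \<omega>"] nrm_commute[OF N, of "x m \<omega>" "x n \<omega>"] nrm_commute[OF N, of x0 "T (x n \<omega>)"]
      by (simp add: nrm_scale[OF N] mult_left_mono)
    finally show ?thesis .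
  qed
  have "(\<integral>\<^sup>+\<omega>. ennreal ((1 - \<beta> n) * N (T (x n \<omega>) - x0) + (\<beta> n * N (x n \<omega> - x m \<omega>) + \<beta> n * N (U n \<omega>))) \<partial>M)
     \<le> ennreal ((1 - \<beta> n) * \<kappa> + (\<beta> n * rr \<beta> a n + \<beta> n * sigmaE M N U n))"
  proof -
    have Dn: "(\<integral>\<^sup>+\<omega>. ennreal (N (x n \<omega> - x m \<omega>)) \<partial>M) \<le> ennreal (rr \<beta> a n)"
      using D[of m] nm by simp
    have i1: "(\<integral>\<^sup>+\<omega>. ennreal ((1 - \<beta> n) * N (T (x n \<omega>) - x0)) \<partial>M) \<le> ennreal ((1 - \<beta> n) * \<kappa>)"
      by (rule nn_cmult_le) (use bn assms(15) in auto)
    have i2: "(\<integral>\<^sup>+\<omega>. ennreal (\<beta> n * N (x n \<omega> - x m \<omega>)) \<partial>M) \<le> ennreal (\<beta> n * rr \<beta> a n)"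
      by (rule nn_cmult_le) (use bn Dn in auto)
    have i3: "(\<integral>\<^sup>+\<omega>. ennreal (\<beta> n * N (U n \<omega>)) \<partial>M) \<le> ennreal (\<beta> n * sigmaE M N U n)"
      by (rule nn_cmult_le) (use bn Vint assms(10,16) in auto)
    show ?thesis
      apply (rule nn_add_le[OF _ _ _ _ i1 nn_add_le[OF _ _ _ _ i2 i3]])
      using bn rrnn sgnn assms(14) assms(10,16) by (simp_all del: rr.simps add: nrm_nonneg[OF N])
  qed
  then have "(\<integral>\<^sup>+\<omega>. ennreal (N (x n \<omega> - T (x n \<omega>))) \<partial>M) \<le> ennreal ((1 - \<beta> n) * \<kappa> + (\<beta> n * rr \<beta> a n + \<beta> n * sigmaE M N U n))"
    by (rule nn_mono_le[OF pw])
  moreover have "\<beta> n * rr \<beta> a n = (\<Sum>i=1..n. Bprod \<beta> i n * a i)"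
    using rr_closed[of \<beta> n a] assms(16) by (simp add: betaz_def)
  ultimately show ?thesis by (simp add: a_def algebra_simps)
qed

end
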